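(* Let $\bar A\in\{0,1\}^{n\times n}$, $\bar S\in\{0,1\}^{n\times q}$, and let $\mathcal B(\bar A,\bar S)$, $\mathcal B(\bar A)$, $\mathcal B(\bar S)$ be as in the context. Define $$t=\max\{|F| : F \text{ a matching of } \mathcal B(\bar S),\ \mathcal R(F)\subseteq \mathcal U_R(M') \text{ for some maximum matching } M' \text{ of } \mathcal B(\bar A)\}.$$ Let $M^*$ be a maximum matching of $\mathcal B(\bar A,\bar S)$ and set $M_{\bar A}=M^*\cap\mathcal E_{\mathcal X,\mathcal X}$, $M_{\bar S}=M^*\cap\mathcal E_{\mathcal S,\mathcal X}$. Then $M^*=M_{\bar S}\cup M_{\bar A}$, $M_{\bar A}$ and $M_{\bar S}$ are disjoint matchings of $\mathcal B(\bar A)$ and $\mathcal B(\bar S)$ respectively, $\mathcal R(M_{\bar S})\subseteq\mathcal U_R(M_{\bar A})$, and $M_{\bar S}$ contains a largest collection of edges incoming into the set of right-unmatched vertices of some maximum matching of $\mathcal B(\bar A)$; that is, there exist a maximum matching $M'$ of $\mathcal B(\bar A)$ and a subset $E\subseteq M_{\bar S}$ with $\mathcal R(E)\subseteq\mathcal U_R(M')$ and $|E|=t$.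
   Context: State variables $\mathcal X=\{x_1,\dots,x_n\}$, slack variables $\mathcal S=\{s_1,\dots,s_q\}$. $\mathcal B(\bar A,\bar S)$ is the bipartite graph with left vertex set $\mathcal X\cup\mathcal S$, right vertex set $\mathcal X$ (left and right copies of $\mathcal X$ are distinct vertices), and edge set $\mathcal E_{\mathcal X,\mathcal X}\cup\mathcal E_{\mathcal S,\mathcal X}$, where $\mathcal E_{\mathcal X,\mathcal X}=\{(x_i,x_j):\bar A_{ji}\neq 0\}$ and $\mathcal E_{\mathcal S,\mathcal X}=\{(s_k,x_j):\bar S_{jk}\neq0\}$ (first endpoint left, second right). $\mathcal B(\bar A)$ is the subgraph with left vertices $\mathcal X$ and edges $\mathcal E_{\mathcal X,\mathcal X}$; $\mathcal B(\bar S)$ is the subgraph with left vertices $\mathcal S$ and edges $\mathcal E_{\mathcal S,\mathcal X}$; both have right vertex set $\mathcal X$. A matching is a set of edges no two sharing a left endpoint or a right endpoint; a maximum matching is one of largest cardinality. $\mathcal R(E)$ is the set of right endpoints of the edges in $E$. For a matching $M$, $\mathcal U_R(M)$ is the set of right vertices not covered by $M$. *)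

theory Defs
  imports Main
begin

(* Vertices: left vertices are  Inl i = x_i  (i < n)  and  Inr k = s_k  (k < q);
   right vertices are  j = x_j  (j < n).
   Matrices are given entrywise: A j i is the (j,i) entry of \<bar>A, S j k the (j,k) entry of \<bar>S. *)

type_synonym edge = "(nat + nat) \<times> nat"

definition E_XX :: "nat \<Rightarrow> (nat \<Rightarrow> nat \<Rightarrow> nat) \<Rightarrow> edge set" where
  "E_XX n A = {(Inl i, j) | i j. i < n \<and> j < n \<and> A j i \<noteq> 0}"

definition E_SX :: "nat \<Rightarrow> nat \<Rightarrow> (nat \<Rightarrow> nat \<Rightarrow> nat) \<Rightarrow> edge set" where
  "E_SX n q S = {(Inr k, j) | k j. k < q \<and> j < n \<and> S j k \<noteq> 0}"

definition is_matching :: "edge set \<Rightarrow> edge set \<Rightarrow> bool" where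
  "is_matching E M \<longleftrightarrow> M \<subseteq> E \<and>
     (\<forall>e\<in>M. \<forall>e'\<in>M. e \<noteq> e' \<longrightarrow> fst e \<noteq> fst e' \<and> snd e \<noteq> snd e')"

definition is_max_matching :: "edge set \<Rightarrow> edge set \<Rightarrow> bool" where
  "is_max_matching E M \<longleftrightarrow> is_matching E M \<and>
     (\<forall>M'. is_matching E M' \<longrightarrow> card M' \<le> card M)"

definition R_end :: "edge set \<Rightarrow> nat set" where
  "R_end E = snd ` E"

definition U_R :: "nat \<Rightarrow> edge set \<Rightarrow> nat set" where
  "U_R n M = {0..<n} - R_end M"

end

theory Submission
  imports Defs
begin

lemma ex_max_on:
  assumes "finite S" "S \<noteq> {}"
  shows "\<exists>x\<in>S. \<forall>y\<in>S. (f y::nat) \<le> f x"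
proof -
  have "Max (f ` S) \<in> f ` S" using assms by (intro Max_in) auto
  then obtain x where x: "x \<in> S" "f x = Max (f ` S)" by auto
  show ?thesis using x assms by (metis Max_ge finite_imageI image_eqI)
qed

lemma match_fst: "is_matching E M \<Longrightarrow> (a,b)\<in>M \<Longrightarrow> (a,c)\<in>M \<Longrightarrow> b=c"
  unfolding is_matching_def by force

lemma match_snd: "is_matching E M \<Longrightarrow> (a,b)\<in>M \<Longrightarrow> (c,b)\<in>M \<Longrightarrow> a=c"
  unfolding is_matching_def by force

lemma match_sub: "is_matching E M \<Longrightarrow> M \<subseteq> E"
  unfolding is_matching_def by blast

lemma match_intro:
  assumes "M \<subseteq> E" "\<And>a b c. (a,b)\<in>M \<Longrightarrow> (a,c)\<in>M \<Longrightarrow> b=c"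
    "\<And>a b c. (a,b)\<in>M \<Longrightarrow> (c,b)\<in>M \<Longrightarrow> a=c"
  shows "is_matching E M"
  unfolding is_matching_def using assms by (metis prod.collapse)

lemma match_mono: "is_matching E M \<Longrightarrow> M' \<subseteq> M \<Longrightarrow> is_matching E M'"
  unfolding is_matching_def by blast

lemma match_mono_E: "is_matching E M \<Longrightarrow> E \<subseteq> E' \<Longrightarrow> is_matching E' M"
  unfolding is_matching_def by blast

lemma match_inj_snd: "is_matching E M \<Longrightarrow> inj_on snd M"
  unfolding is_matching_def inj_on_def by blast

lemma match_card_snd: "is_matching E M \<Longrightarrow> card (snd ` M) = card M"
  by (simp add: card_image match_inj_snd)

lemma match_union:
  assumes "is_matching E1 M1" "is_matching E2 M2"
    "fst ` M1 \<inter> fst ` M2 = {}" "snd ` M1 \<inter> snd ` M2 = {}"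
  shows "is_matching (E1 \<union> E2) (M1 \<union> M2)"
  using assms unfolding is_matching_def by (auto simp: disjoint_iff)

lemma aug:
  assumes "finite E" "is_matching E N" "is_matching E M" "v \<in> snd ` M - snd ` N"
  shows "\<exists>N'. is_matching E N' \<and> (card N < card N' \<or>
           (card N' = card N \<and> card (snd`N \<inter> snd`M) < card (snd`N' \<inter> snd`M)))"
  using assms
proof (induction "card (M - N)" arbitrary: N v rule: less_induct)
  case less
  have mN: "is_matching E N" using less.prems(2) .
  have mM: "is_matching E M" using less.prems(3) .
  have finN: "finite N" using match_sub[OF mN] less.prems(1) by (rule finite_subset)
  have finM: "finite M" using match_sub[OF mM] less.prems(1) by (rule finite_subset)
  obtain u where uv: "(u,v) \<in> M" using less.prems(4) by auto
  have vN: "v \<notin> snd ` N" using less.prems(4) by blast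
  have vN': "\<And>c. (c,v) \<notin> N" using vN by force
  have uvE: "(u,v) \<in> E" using uv match_sub[OF mM] by blast
  have uvN: "(u,v) \<notin> N" using vN' by blast
  show ?case
  proof (cases "\<exists>w. (u,w) \<in> N")
    case False
    define N1 where "N1 = insert (u,v) N"
    have "is_matching E N1" unfolding N1_def
    proof (rule match_intro)
      show "insert (u, v) N \<subseteq> E" using uvE match_sub[OF mN] by blast
    next
      fix a b c assume ab: "(a,b) \<in> insert (u, v) N" and ac: "(a,c) \<in> insert (u, v) N"
      show "b = c"
      proof (cases "(a,b) = (u,v)")
        case True
        then show ?thesis using ac False by auto
      next
        case F2: False
        then have abN: "(a,b) \<in> N" using ab by blast
        show ?thesis
        proof (cases "(a,c) = (u,v)")
          case True then show ?thesis using abN False by auto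
        next
          case False then show ?thesis using abN ac match_fst[OF mN] by blast
        qed
      qed
    next
      fix a b c assume ab: "(a,b) \<in> insert (u, v) N" and ac: "(c,b) \<in> insert (u, v) N"
      show "a = c"
      proof (cases "(a,b) = (u,v)")
        case True
        then show ?thesis using ac vN' by auto
      next
        case F2: False
        then have abN: "(a,b) \<in> N" using ab by blast
        show ?thesis
        proof (cases "(c,b) = (u,v)")
          case True then show ?thesis using abN vN' by auto
        next
          case False then show ?thesis using abN ac match_snd[OF mN] by blast
        qed
      qed
    qed
    moreover have "card N1 = Suc (card N)" unfolding N1_def using finN uvN
      by (rule card_insert_disjoint)
    ultimately show ?thesis by auto
  next
    case True
    then obtain w where uw: "(u,w) \<in> N" by blast
    have wv: "w \<noteq> v" using uw vN' by blast
    have uonly: "\<And>b. (u,b) \<in> N \<Longrightarrow> b = w" using match_fst[OF mN] uw by blast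
    have wonly: "\<And>a. (a,w) \<in> N \<Longrightarrow> a = u" using match_snd[OF mN] uw by blast
    define N1 where "N1 = insert (u,v) (N - {(u,w)})"
    have m1: "is_matching E N1" unfolding N1_def
    proof (rule match_intro)
      show "insert (u, v) (N - {(u, w)}) \<subseteq> E" using uvE match_sub[OF mN] by blast
    next
      fix a b c assume ab: "(a,b) \<in> insert (u, v) (N - {(u, w)})" and ac: "(a,c) \<in> insert (u, v) (N - {(u, w)})"
      show "b = c"
      proof (cases "(a,b) = (u,v)")
        case True
        then show ?thesis using ac uonly by auto
      next
        case F2: False
        then have abN: "(a,b) \<in> N" "(a,b) \<noteq> (u,w)" using ab by blast+
        show ?thesis
        proof (cases "(a,c) = (u,v)")
          case True then show ?thesis using abN uonly by auto
        next
          case False then show ?thesis using abN ac match_fst[OF mN] by blast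
        qed
      qed
    next
      fix a b c assume ab: "(a,b) \<in> insert (u, v) (N - {(u, w)})" and ac: "(c,b) \<in> insert (u, v) (N - {(u, w)})"
      show "a = c"
      proof (cases "(a,b) = (u,v)")
        case True
        then show ?thesis using ac vN' by auto
      next
        case F2: False
        then have abN: "(a,b) \<in> N" using ab by blast
        show ?thesis
        proof (cases "(c,b) = (u,v)")
          case True then show ?thesis using abN vN' by auto
        next
          case False then show ?thesis using abN ac match_snd[OF mN] by blast
        qed
      qed
    qed
    have c1: "card N1 = card N"
    proof -
      have "card (N - {(u,w)}) = card N - 1" using finN uw by simp
      moreover have "(u,v) \<notin> N - {(u,w)}" using uvN by blast
      moreover have "card N \<ge> 1" using finN uw
        by (metis One_nat_def Suc_leI card_gt_0_iff empty_iff)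
      ultimately show ?thesis unfolding N1_def using finN by simp
    qed
    have s0: "snd ` (N - {(u,w)}) = snd ` N - {w}"
    proof
      show "snd ` (N - {(u,w)}) \<subseteq> snd ` N - {w}"
      proof
        fix y assume "y \<in> snd ` (N - {(u,w)})"
        then obtain a where ay: "(a,y) \<in> N" "(a,y) \<noteq> (u,w)" by force
        have "y \<noteq> w" using ay wonly by blast
        then show "y \<in> snd ` N - {w}" using ay(1) by force
      qed
    next
      show "snd ` N - {w} \<subseteq> snd ` (N - {(u,w)})"
      proof
        fix y assume "y \<in> snd ` N - {w}"
        then obtain a where ay: "(a,y) \<in> N" "y \<noteq> w" by force
        then have "(a,y) \<in> N - {(u,w)}" by blast
        then show "y \<in> snd ` (N - {(u,w)})" by force
      qed
    qed
    have s1: "snd ` N1 = insert v (snd ` N - {w})" unfolding N1_def using s0 by simp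
    have vM: "v \<in> snd ` M" using uv by force
    show ?thesis
    proof (cases "w \<in> snd ` M")
      case False
      have "snd ` N1 \<inter> snd ` M = insert v (snd ` N \<inter> snd ` M)"
        using s1 False vM by blast
      moreover have "v \<notin> snd ` N \<inter> snd ` M" using vN by blast
      moreover have "finite (snd ` N \<inter> snd ` M)" using finN by simp
      ultimately have "card (snd ` N \<inter> snd ` M) < card (snd ` N1 \<inter> snd ` M)" by simp
      then show ?thesis using m1 c1 by auto
    next
      case True
      have uwM: "(u,w) \<notin> M" using uv wv match_fst[OF mM] by blast
      have "M - N1 = (M - N) - {(u,v)}" unfolding N1_def using uwM by blast
      moreover have "(u,v) \<in> M - N" using uv uvN by blast
      moreover have "finite (M - N)" using finM by simp
      ultimately have lt: "card (M - N1) < card (M - N)"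
        by (metis card_Diff1_less)
      have wM1: "w \<in> snd ` M - snd ` N1" using True s1 wv by blast
      obtain N' where N': "is_matching E N'" "card N1 < card N' \<or>
           (card N' = card N1 \<and> card (snd`N1 \<inter> snd`M) < card (snd`N' \<inter> snd`M))"
        using less.hyps[OF lt less.prems(1) m1 mM wM1] by blast
      have eqs: "snd`N1 \<inter> snd`M = insert v ((snd`N \<inter> snd`M) - {w})" using s1 vM by blast
      have wi: "w \<in> snd`N \<inter> snd`M" using uw True by force
      have fi: "finite (snd ` N \<inter> snd ` M)" using finN by simp
      have "card (insert v ((snd`N \<inter> snd`M) - {w})) = Suc (card ((snd`N \<inter> snd`M) - {w}))"
        using fi vN by (simp add: card_insert_disjoint)
      also have "\<dots> = card (snd`N \<inter> snd`M)" using fi wi by (rule card_Suc_Diff1)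
      finally have "card (snd`N1 \<inter> snd`M) = card (snd`N \<inter> snd`M)" using eqs by simp
      then show ?thesis using N' c1 by auto
    qed
  qed
qed

lemma max_le: "is_max_matching E M \<Longrightarrow> is_matching E M' \<Longrightarrow> card M' \<le> card M"
  unfolding is_max_matching_def by blast

lemma finite_EXX: "finite (E_XX n A)"
proof -
  have "E_XX n A \<subseteq> (Inl ` {..<n}) \<times> {..<n}" unfolding E_XX_def by auto
  then show ?thesis by (rule finite_subset) auto
qed

lemma finite_ESX: "finite (E_SX n q S)"
proof -
  have "E_SX n q S \<subseteq> (Inr ` {..<q}) \<times> {..<n}" unfolding E_SX_def by auto
  then show ?thesis by (rule finite_subset) auto
qed

lemma ex_max_matching:
  assumes "finite E"
  shows "\<exists>M. is_max_matching E M"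
proof -
  have "finite {M. is_matching E M}" using assms
    by (rule finite_subset[rotated, OF finite_Pow_iff[THEN iffD2]]) (auto dest: match_sub)
  moreover have "{} \<in> {M. is_matching E M}" unfolding is_matching_def by auto
  ultimately obtain M where "M \<in> {M. is_matching E M}" "\<forall>y\<in>{M. is_matching E M}. card y \<le> card M"
    using ex_max_on[of "{M. is_matching E M}" card] by blast
  then show ?thesis unfolding is_max_matching_def by auto
qed

lemma extend_max:
  assumes "finite E" "is_matching E M"
  shows "\<exists>N. is_max_matching E N \<and> snd ` M \<subseteq> snd ` N"
proof -
  let ?S = "{N. is_max_matching E N}"
  have "finite ?S" using assms(1)
    by (rule finite_subset[rotated, OF finite_Pow_iff[THEN iffD2]])
       (auto simp: is_max_matching_def dest: match_sub)
  moreover have "?S \<noteq> {}" using ex_max_matching[OF assms(1)] by auto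
  ultimately obtain N where N: "N \<in> ?S" and Nm: "\<forall>y\<in>?S. card (snd`y \<inter> snd`M) \<le> card (snd`N \<inter> snd`M)"
    using ex_max_on[of ?S "\<lambda>N. card (snd`N \<inter> snd`M)"] by blast
  have Nmax: "is_max_matching E N" using N by simp
  have mN: "is_matching E N" using Nmax unfolding is_max_matching_def by (rule conjunct1)
  have "snd ` M \<subseteq> snd ` N"
  proof
    fix v assume v: "v \<in> snd ` M"
    show "v \<in> snd ` N"
    proof (rule ccontr)
      assume nv: "v \<notin> snd ` N"
      have "v \<in> snd ` M - snd ` N" using v nv by blast
      from aug[OF assms(1) mN assms(2) this]
      obtain N' where N': "is_matching E N'" "card N < card N' \<or>
           (card N' = card N \<and> card (snd`N \<inter> snd`M) < card (snd`N' \<inter> snd`M))"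
        by blast
      have le: "card N' \<le> card N" using max_le[OF Nmax N'(1)] .
      then have eq: "card N' = card N" and lt: "card (snd`N \<inter> snd`M) < card (snd`N' \<inter> snd`M)"
        using N'(2) by linarith+
      have "is_max_matching E N'" unfolding is_max_matching_def
        using N'(1) max_le[OF Nmax] eq by simp
      then have "card (snd`N' \<inter> snd`M) \<le> card (snd`N \<inter> snd`M)" using Nm by blast
      then show False using lt by linarith
    qed
  qed
  then show ?thesis using N by auto
qed

theorem lemma2:
  fixes n q :: nat and A S :: "nat \<Rightarrow> nat \<Rightarrow> nat" and Mstar :: "edge set"
  assumes A01: "\<forall>i<n. \<forall>j<n. A i j \<in> {0, 1}"
    and S01: "\<forall>j<n. \<forall>k<q. S j k \<in> {0, 1}"
    and Mmax: "is_max_matching (E_XX n A \<union> E_SX n q S) Mstar"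
  defines "t \<equiv> Max {card F | F. is_matching (E_SX n q S) F \<and>
                 (\<exists>M'. is_max_matching (E_XX n A) M' \<and> R_end F \<subseteq> U_R n M')}"
    and "MA \<equiv> Mstar \<inter> E_XX n A"
    and "MS \<equiv> Mstar \<inter> E_SX n q S"
  shows "Mstar = MS \<union> MA \<and> MA \<inter> MS = {} \<and>
         is_matching (E_XX n A) MA \<and> is_matching (E_SX n q S) MS \<and>
         R_end MS \<subseteq> U_R n MA \<and>
         (\<exists>M' E. is_max_matching (E_XX n A) M' \<and> E \<subseteq> MS \<and>
                  R_end E \<subseteq> U_R n M' \<and> card E = t)"
proof -
  let ?EA = "E_XX n A" and ?ES = "E_SX n q S"
  have mst: "is_matching (?EA \<union> ?ES) Mstar" using Mmax unfolding is_max_matching_def by auto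
  have finU: "finite (?EA \<union> ?ES)" using finite_EXX finite_ESX by blast
  have finM: "finite Mstar" using match_sub[OF mst] finU by (rule finite_subset)
  have disjE: "?EA \<inter> ?ES = {}" unfolding E_XX_def E_SX_def by auto
  have fstA: "\<And>e. e \<in> ?EA \<Longrightarrow> fst e \<in> range Inl" unfolding E_XX_def by auto
  have fstS: "\<And>e. e \<in> ?ES \<Longrightarrow> fst e \<in> range Inr" unfolding E_SX_def by auto
  have sndS: "\<And>e. e \<in> ?ES \<Longrightarrow> snd e < n" unfolding E_SX_def by auto
  have sndA: "\<And>e. e \<in> ?EA \<Longrightarrow> snd e < n" unfolding E_XX_def by auto
  have fdisj: "\<And>X Y. X \<subseteq> ?EA \<Longrightarrow> Y \<subseteq> ?ES \<Longrightarrow> fst ` X \<inter> fst ` Y = {}"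
    using fstA fstS by fastforce
  have c1: "Mstar = MS \<union> MA" using mst match_sub unfolding MA_def MS_def by blast
  have c2: "MA \<inter> MS = {}" using disjE unfolding MA_def MS_def by blast
  have mA: "is_matching ?EA MA" using mst unfolding MA_def is_matching_def by blast
  have mS: "is_matching ?ES MS" using mst unfolding MS_def is_matching_def by blast
  have rdisj: "snd ` MS \<inter> snd ` MA = {}"
  proof -
    { fix e e' assume e: "e \<in> MS" and e': "e' \<in> MA" and eq: "snd e = snd e'"
      have "e \<noteq> e'" using e e' c2 by blast
      then have False using mst e e' eq unfolding is_matching_def MS_def MA_def by blast }
    then show ?thesis by blast
  qed
  have c5: "R_end MS \<subseteq> U_R n MA" unfolding R_end_def U_R_def
    using rdisj sndS unfolding MS_def by auto
  have cardM: "card Mstar = card MS + card MA" using c1 c2 finM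
    by (metis card_Un_disjoint finite_Un inf_commute)
  obtain M' where M': "is_max_matching ?EA M'" and sub: "snd ` MA \<subseteq> snd ` M'"
    using extend_max[OF finite_EXX mA] by blast
  have mM': "is_matching ?EA M'" using M' unfolding is_max_matching_def by auto
  have finM': "finite M'" using match_sub[OF mM'] finite_EXX by (rule finite_subset)
  have finMA: "finite MA" and finMS: "finite MS" using finM c1 by auto
  have bound: "\<And>F M''. is_matching ?ES F \<Longrightarrow> is_max_matching ?EA M'' \<Longrightarrow>
      R_end F \<subseteq> U_R n M'' \<Longrightarrow> card F + card M' \<le> card Mstar"
  proof -
    fix F M'' assume F: "is_matching ?ES F" and M'': "is_max_matching ?EA M''"
      and R: "R_end F \<subseteq> U_R n M''"
    have mM'': "is_matching ?EA M''" using M'' unfolding is_max_matching_def by (rule conjunct1)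
    have l1: "card M' \<le> card M''" using max_le[OF M'' mM'] .
    have l2: "card M'' \<le> card M'" using max_le[OF M' mM''] .
    have fd: "fst ` F \<inter> fst ` M'' = {}"
      using fdisj[OF match_sub[OF mM''] match_sub[OF F]] by blast
    have sd: "snd ` F \<inter> snd ` M'' = {}"
    proof -
      have "snd ` F \<subseteq> {0..<n} - snd ` M''" using R unfolding R_end_def U_R_def .
      then show ?thesis by blast
    qed
    have "is_matching (?ES \<union> ?EA) (F \<union> M'')"
      using match_union[OF F mM'' fd sd] .
    then have "is_matching (?EA \<union> ?ES) (F \<union> M'')"
      by (rule match_mono_E) blast
    then have le: "card (F \<union> M'') \<le> card Mstar" by (rule max_le[OF Mmax])
    have "F \<inter> M'' = {}" using match_sub[OF F] match_sub[OF mM''] disjE by blast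
    moreover have "finite F" using match_sub[OF F] finite_ESX by (rule finite_subset)
    moreover have "finite M''" using match_sub[OF mM''] finite_EXX by (rule finite_subset)
    ultimately have "card (F \<union> M'') = card F + card M''" by (rule card_Un_disjoint[rotated 2])
    then show "card F + card M' \<le> card Mstar" using le l1 l2 by linarith
  qed
  have sub2: "snd ` M' \<subseteq> snd ` MA \<union> snd ` MS"
  proof
    fix v assume v: "v \<in> snd ` M'"
    show "v \<in> snd ` MA \<union> snd ` MS"
    proof (rule ccontr)
      assume nv: "v \<notin> snd ` MA \<union> snd ` MS"
      define K where "K = {e \<in> M'. snd e \<in> insert v (snd ` MA)}"
      have Ksub: "K \<subseteq> M'" unfolding K_def by blast
      have mK: "is_matching ?EA K" using match_mono[OF mM' Ksub] .
      have sK: "snd ` K = insert v (snd ` MA)"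
      proof
        show "snd ` K \<subseteq> insert v (snd ` MA)" unfolding K_def by blast
      next
        show "insert v (snd ` MA) \<subseteq> snd ` K"
        proof
          fix y assume y: "y \<in> insert v (snd ` MA)"
          then have "y \<in> snd ` M'" using v sub by blast
          then obtain e where "e \<in> M'" "snd e = y" by blast
          then have "e \<in> K" using y unfolding K_def by blast
          then show "y \<in> snd ` K" using \<open>snd e = y\<close> by blast
        qed
      qed
      have vMA: "v \<notin> snd ` MA" using nv by blast
      have "card K = card (snd ` K)" using match_card_snd[OF mK] by simp
      also have "\<dots> = Suc (card (snd ` MA))" using sK vMA finMA by simp
      also have "\<dots> = Suc (card MA)" using match_card_snd[OF mA] by simp
      finally have cK: "card K = Suc (card MA)" .
      have fd: "fst ` MS \<inter> fst ` K = {}"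
        using fdisj[OF match_sub[OF mK] match_sub[OF mS]] by blast
      have sd: "snd ` MS \<inter> snd ` K = {}" unfolding sK using rdisj nv by blast
      have "is_matching (?ES \<union> ?EA) (MS \<union> K)" using match_union[OF mS mK fd sd] .
      then have "is_matching (?EA \<union> ?ES) (MS \<union> K)" by (rule match_mono_E) blast
      then have le: "card (MS \<union> K) \<le> card Mstar" by (rule max_le[OF Mmax])
      have "MS \<inter> K = {}" using match_sub[OF mK] disjE unfolding MS_def by blast
      moreover have "finite K" using finM' Ksub by (rule finite_subset[rotated])
      ultimately have "card (MS \<union> K) = card MS + card K" using finMS by (simp add: card_Un_disjoint)
      then show False using le cK cardM by linarith
    qed
  qed
  define E where "E = {e \<in> MS. snd e \<notin> snd ` M'}"
  define G where "G = {e \<in> MS. snd e \<in> snd ` M'}"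
  have EG: "MS = E \<union> G" "E \<inter> G = {}" unfolding E_def G_def by auto
  have Gsub: "G \<subseteq> MS" unfolding G_def by blast
  have mG: "is_matching ?ES G" using match_mono[OF mS Gsub] .
  have sG: "snd ` G = snd ` M' - snd ` MA"
  proof
    show "snd ` G \<subseteq> snd ` M' - snd ` MA"
    proof
      fix y assume "y \<in> snd ` G"
      then obtain e where e0: "e \<in> G" and ye: "y = snd e" by (rule imageE)
      have e1: "e \<in> MS" "snd e \<in> snd ` M'" using e0 unfolding G_def by simp_all
      have "snd e \<in> snd ` MS" using e1(1) by (rule imageI)
      then have "snd e \<notin> snd ` MA" using rdisj by blast
      then show "y \<in> snd ` M' - snd ` MA" using e1(2) ye by simp
    qed
  next
    show "snd ` M' - snd ` MA \<subseteq> snd ` G"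
    proof
      fix y assume y: "y \<in> snd ` M' - snd ` MA"
      then have "y \<in> snd ` MS" using sub2 by blast
      then obtain e where e: "e \<in> MS" and ye: "y = snd e" by (rule imageE)
      have "snd e \<in> snd ` M'" using y ye by simp
      then have "e \<in> G" using e unfolding G_def by simp
      then have "snd e \<in> snd ` G" by (rule imageI)
      then show "y \<in> snd ` G" using ye by simp
    qed
  qed
  have "card G = card (snd ` G)" using match_card_snd[OF mG] by simp
  also have "\<dots> = card (snd ` M') - card (snd ` MA)"
    unfolding sG using sub finMA by (simp add: card_Diff_subset)
  also have "\<dots> = card M' - card MA" using match_card_snd[OF mM'] match_card_snd[OF mA] by simp
  finally have cG: "card G = card M' - card MA" .
  have "card MA \<le> card M'" using max_le[OF M' mA] .
  moreover have "card MS = card E + card G"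
  proof -
    have "finite E" "finite G" using finMS EG(1) by auto
    then show ?thesis using EG card_Un_disjoint by metis
  qed
  ultimately have cE: "card E + card M' = card Mstar" using cardM cG by simp
  have ER: "R_end E \<subseteq> U_R n M'"
  proof
    fix y assume "y \<in> R_end E"
    then obtain e where e: "e \<in> MS" "snd e \<notin> snd ` M'" "y = snd e" unfolding R_end_def E_def by blast
    have "e \<in> ?ES" using e(1) unfolding MS_def by blast
    then have "y < n" using sndS e(3) by blast
    then show "y \<in> U_R n M'" unfolding U_R_def R_end_def using e by simp
  qed
  have Esub: "E \<subseteq> MS" unfolding E_def by blast
  have mE: "is_matching ?ES E" using match_mono[OF mS Esub] .
  let ?T = "{card F | F. is_matching ?ES F \<and>
                 (\<exists>M'. is_max_matching ?EA M' \<and> R_end F \<subseteq> U_R n M')}"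
  have inT: "card E \<in> ?T" using mE M' ER by blast
  have leT: "\<And>x. x \<in> ?T \<Longrightarrow> x \<le> card E"
  proof -
    fix x assume "x \<in> ?T"
    then obtain F M'' where "x = card F" "is_matching ?ES F" "is_max_matching ?EA M''"
       "R_end F \<subseteq> U_R n M''" by blast
    then show "x \<le> card E" using bound[of F M''] cE by linarith
  qed
  have finT: "finite ?T"
    by (rule finite_subset[of _ "{..card E}"]) (use leT in auto)
  have "t = card E" unfolding t_def
    by (rule Max_eqI[OF finT]) (use leT inT in auto)
  then show ?thesis using c1 c2 mA mS c5 M' ER Esub by blast
qed

end
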